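(* Let $A>0$ (area of the subregion), $E_{\rm b}>0$ (battery capacity), $P_{\rm c}>0$ (on-board circuit power), $\lambda>0$, $S>0$, and suppose $h_{\rm n}^*\ge0$ minimizes $\Gamma$ on $[0,\infty)$. For $R>0$ and $h\ge0$ define the UAV recall frequency $$\Phi(R,h)=\frac{A}{\pi R^2}\cdot\frac{P_{\rm t}(R,\lambda,h,S)+P_{\rm c}}{E_{\rm b}}.$$ Then for all $R>0$, $h\ge 0$, $$\Phi(R,h)\ \ge\ \frac{2A}{\pi E_{\rm b}}\sqrt{\lambda(2^S-1)\,P_{\rm c}\,\Gamma(h_{\rm n}^* )},$$ and equality holds at $(R^*,h^* )$ with $$R^*=\sqrt[4]{\frac{P_{\rm c}}{\lambda(2^S-1)\,\Gamma(h_{\rm n}^* )}},\qquad h^*=R^*h_{\rm n}^*.$$ Consequently, for a region split into subregions $\beta=1,\dots,\kappa$ with parameters $A(\beta),\lambda(\beta)$ (and common $E_{\rm b},P_{\rm c},S$), the total $\sum_{\beta}\Phi_\beta(R(\beta),h(\beta))$ is minimized over $R(\beta)>0,h(\beta)\ge0$ by choosing $(R(\beta),h(\beta))=(R^*(\beta),R^*(\beta)h_{\rm n}^* )$ in each subregion, with $R^*(\beta)$ given by the formula above with $\lambda=\lambda(\beta)$.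
   Context: Fix constants $f_{\rm c}>0$, $c>0$, $N_0>0$, $\eta_0>0,\eta_1>0$, $a>0$, $b>0$. For $r>0$, $h\ge 0$, let $\theta(r,h)=\frac{180}{\pi}\arctan(h/r)$, $P_0(r,h)=\dfrac{1}{1+a\exp(-b[\theta(r,h)-a])}$, and $$\bar L(r,h)=\left(\frac{4\pi f_{\rm c}}{c}\right)^2 (r^2+h^2)\,\big(\eta_1+P_0(r,h)(\eta_0-\eta_1)\big).$$ For $R>0$, $\lambda>0$, $h\ge0$, $S>0$, the transmit power is $P_{\rm t}(R,\lambda,h,S)=\lambda\int_0^R 2\pi r\,\bar L(r,h)\,N_0\,(2^S-1)\,dr$, and the kernel function is $\Gamma(x):=P_{\rm t}(1,1,x,1)=\int_0^1 2\pi r\,\bar L(r,x)\,N_0\,dr$ for $x\ge0$. The number of UAVs covering a subregion of area $A$ with coverage radius $R$ is $A/(\pi R^2)$; $\Phi_\beta$ denotes $\Phi$ computed with the parameters $A(\beta),\lambda(\beta)$ of subregion $\beta$. *)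

theory Defs
  imports "HOL-Analysis.Analysis"
begin

definition elev_angle :: "real \<Rightarrow> real \<Rightarrow> real" where
  "elev_angle r h = (180 / pi) * arctan (h / r)"

definition P0 :: "real \<Rightarrow> real \<Rightarrow> real \<Rightarrow> real \<Rightarrow> real" where
  "P0 a b r h = 1 / (1 + a * exp (- b * (elev_angle r h - a)))"

definition Lbar :: "real \<Rightarrow> real \<Rightarrow> real \<Rightarrow> real \<Rightarrow> real \<Rightarrow> real \<Rightarrow> real \<Rightarrow> real \<Rightarrow> real" where
  "Lbar fc c eta0 eta1 a b r h =
     (4 * pi * fc / c)^2 * (r^2 + h^2) * (eta1 + P0 a b r h * (eta0 - eta1))"

definition Pt :: "real \<Rightarrow> real \<Rightarrow> real \<Rightarrow> real \<Rightarrow> real \<Rightarrow> real \<Rightarrow> real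
                  \<Rightarrow> real \<Rightarrow> real \<Rightarrow> real \<Rightarrow> real \<Rightarrow> real" where
  "Pt fc c N0 eta0 eta1 a b R lam h S =
     lam * integral {0..R} (\<lambda>r. 2 * pi * r * Lbar fc c eta0 eta1 a b r h * N0 * (2 powr S - 1))"

definition Gam :: "real \<Rightarrow> real \<Rightarrow> real \<Rightarrow> real \<Rightarrow> real \<Rightarrow> real \<Rightarrow> real \<Rightarrow> real \<Rightarrow> real" where
  "Gam fc c N0 eta0 eta1 a b x = Pt fc c N0 eta0 eta1 a b 1 1 x 1"

definition Phi :: "real \<Rightarrow> real \<Rightarrow> real \<Rightarrow> real \<Rightarrow> real \<Rightarrow> real \<Rightarrow> real
                   \<Rightarrow> real \<Rightarrow> real \<Rightarrow> real \<Rightarrow> real \<Rightarrow> real \<Rightarrow> real \<Rightarrow> real \<Rightarrow> real" where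
  "Phi fc c N0 eta0 eta1 a b A Eb Pc lam S R h =
     (A / (pi * R^2)) * ((Pt fc c N0 eta0 eta1 a b R lam h S + Pc) / Eb)"

definition Ropt :: "real \<Rightarrow> real \<Rightarrow> real \<Rightarrow> real \<Rightarrow> real \<Rightarrow> real \<Rightarrow> real
                    \<Rightarrow> real \<Rightarrow> real \<Rightarrow> real \<Rightarrow> real \<Rightarrow> real" where
  "Ropt fc c N0 eta0 eta1 a b Pc lam S hn =
     root 4 (Pc / (lam * (2 powr S - 1) * Gam fc c N0 eta0 eta1 a b hn))"

end

theory Submission
  imports Defs
begin

lemma img01: "(R::real) > 0 \<Longrightarrow> (\<lambda>x. x / R) ` {0..R} = {0..1}"
proof -
  assume R: "R > 0"
  have "bij_betw (\<lambda>x. x / R) {0..R} {0..1}"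
    by (rule bij_betwI[of _ _ _ "\<lambda>x. x * R"]) (use R in \<open>auto simp: field_simps\<close>)
  thus ?thesis by (simp add: bij_betw_def)
qed

lemma int_scale: "(R::real) > 0 \<Longrightarrow> integral {0..R} f = R * integral {0..1} (\<lambda>t. f (R * t))"
  using integral_stretch_real[of R 0 R f] img01[of R] by simp

lemma Lbar_scale:
  assumes "R > 0"
  shows "Lbar fc c eta0 eta1 a b (R * t) h = R^2 * Lbar fc c eta0 eta1 a b t (h / R)"
proof -
  have "h / (R * t) = (h / R) / t" by simp
  hence "elev_angle (R*t) h = elev_angle t (h/R)" by (simp add: elev_angle_def)
  hence "P0 a b (R*t) h = P0 a b t (h/R)" by (simp add: P0_def)
  moreover have "(R*t)^2 + h^2 = R^2 * (t^2 + (h/R)^2)" using assms by (simp add: field_simps)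
  ultimately show ?thesis by (simp add: Lbar_def)
qed

lemma Pt_scale:
  assumes "R > 0"
  shows "Pt fc c N0 eta0 eta1 a b R lam h S
     = lam * (2 powr S - 1) * R^4 * Gam fc c N0 eta0 eta1 a b (h / R)"
proof -
  have "integral {0..R} (\<lambda>r. 2 * pi * r * Lbar fc c eta0 eta1 a b r h * N0 * (2 powr S - 1))
      = R * integral {0..1} (\<lambda>t. 2 * pi * (R*t) * Lbar fc c eta0 eta1 a b (R*t) h * N0 * (2 powr S - 1))"
    by (rule int_scale[OF assms])
  also have "(\<lambda>t. 2 * pi * (R*t) * Lbar fc c eta0 eta1 a b (R*t) h * N0 * (2 powr S - 1))
     = (\<lambda>t. (2 * pi * t * Lbar fc c eta0 eta1 a b t (h/R) * N0 * 1) * (R^3 * (2 powr S - 1)))"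
    using Lbar_scale[OF assms] by (simp add: power_def algebra_simps)
  also have "integral {0..1} (\<lambda>t. (2 * pi * t * Lbar fc c eta0 eta1 a b t (h/R) * N0 * 1) * (R^3 * (2 powr S - 1)))
     = integral {0..1} (\<lambda>t. 2 * pi * t * Lbar fc c eta0 eta1 a b t (h/R) * N0 * (2 powr 1 - 1)) * (R^3 * (2 powr S - 1))"
    using integral_mult_left[of "{0..1}" "\<lambda>t. 2 * pi * t * Lbar fc c eta0 eta1 a b t (h/R) * N0 * 1" "R^3 * (2 powr S - 1)"]
    by simp
  finally have I: "integral {0..R} (\<lambda>r. 2 * pi * r * Lbar fc c eta0 eta1 a b r h * N0 * (2 powr S - 1))
     = R * (Gam fc c N0 eta0 eta1 a b (h / R) * (R^3 * (2 powr S - 1)))"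
    unfolding Gam_def Pt_def by simp
  show ?thesis unfolding Pt_def I by (simp add: power3_eq_cube power4_eq_xxxx mult_ac)
qed

lemma Lbar_nonneg:
  assumes "eta0 > 0" "eta1 > 0" "a > 0"
  shows "Lbar fc c eta0 eta1 a b r h \<ge> 0"
proof -
  have p0: "P0 a b r h > 0" "P0 a b r h \<le> 1" using assms
    by (auto simp: P0_def field_simps add_pos_pos)
  have "eta1 + P0 a b r h * (eta0 - eta1) = (1 - P0 a b r h) * eta1 + P0 a b r h * eta0"
    by (simp add: algebra_simps)
  also have "\<dots> \<ge> 0" using p0 assms by (intro add_nonneg_nonneg mult_nonneg_nonneg) auto
  finally show ?thesis unfolding Lbar_def by simp
qed

lemma Gam_nonneg:
  assumes "N0 > 0" "eta0 > 0" "eta1 > 0" "a > 0"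
  shows "Gam fc c N0 eta0 eta1 a b x \<ge> 0"
proof -
  let ?f = "\<lambda>r. 2 * pi * r * Lbar fc c eta0 eta1 a b r x * N0 * (2 powr 1 - 1)"
  have "integral {0..1} ?f \<ge> 0"
  proof (cases "?f integrable_on {0..1}")
    case True
    then show ?thesis
      using Lbar_nonneg[OF assms(2-4)] assms(1)
      by (intro integral_nonneg) auto
  next
    case False
    then show ?thesis using not_integrable_integral[OF False] by linarith
  qed
  thus ?thesis by (simp add: Gam_def Pt_def)
qed

lemma main1:
  fixes fc c N0 eta0 eta1 a b A Eb Pc lam S hn :: real
  assumes "N0 > 0" "eta0 > 0" "eta1 > 0" "a > 0"
    and "A > 0" "Eb > 0" "Pc > 0" "lam > 0" "S > 0"
    and hmin: "\<forall>x\<ge>0. Gam fc c N0 eta0 eta1 a b hn \<le> Gam fc c N0 eta0 eta1 a b x"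
  shows "(\<forall>R h. R > 0 \<longrightarrow> h \<ge> 0 \<longrightarrow>
            Phi fc c N0 eta0 eta1 a b A Eb Pc lam S R h
              \<ge> 2 * A / (pi * Eb) * sqrt (lam * (2 powr S - 1) * Pc * Gam fc c N0 eta0 eta1 a b hn))
       \<and> Phi fc c N0 eta0 eta1 a b A Eb Pc lam S
            (Ropt fc c N0 eta0 eta1 a b Pc lam S hn)
            (Ropt fc c N0 eta0 eta1 a b Pc lam S hn * hn)
          = 2 * A / (pi * Eb) * sqrt (lam * (2 powr S - 1) * Pc * Gam fc c N0 eta0 eta1 a b hn)"
proof -
  define G where "G = Gam fc c N0 eta0 eta1 a b hn"
  define k where "k = lam * (2 powr S - 1)"
  have k: "k > 0" using assms by (simp add: k_def)
  have G: "G \<ge> 0" unfolding G_def using Gam_nonneg assms by blast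
  have C: "A / (pi * Eb) > 0" using assms by simp
  have part1: "Phi fc c N0 eta0 eta1 a b A Eb Pc lam S R h \<ge> 2 * A / (pi * Eb) * sqrt (k * Pc * G)"
    if R: "R > 0" and h: "h \<ge> 0" for R h
  proof -
    have Gh: "Gam fc c N0 eta0 eta1 a b (h/R) \<ge> G" using hmin h R unfolding G_def by simp
    have eq: "Phi fc c N0 eta0 eta1 a b A Eb Pc lam S R h
        = A / (pi * Eb) * (k * R^2 * Gam fc c N0 eta0 eta1 a b (h/R) + Pc / R^2)"
      using R by (simp add: Phi_def Pt_scale k_def field_simps power_def)
    have "k * R^2 * Gam fc c N0 eta0 eta1 a b (h/R) \<ge> k * R^2 * G"
      using Gh k R by (intro mult_left_mono) auto
    moreover have "k * R^2 * G + Pc / R^2 \<ge> 2 * sqrt (k * Pc * G)"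
    proof -
      let ?x = "sqrt (k * G) * R" and ?y = "sqrt Pc / R"
      have "0 \<le> (?x - ?y)^2" by simp
      also have "(?x - ?y)^2 = k * R^2 * G + Pc / R^2 - 2 * sqrt (k * Pc * G)"
        using R k G assms(7)
        by (simp add: power2_eq_square field_simps real_sqrt_mult)
      finally show ?thesis by simp
    qed
    ultimately have "k * R^2 * Gam fc c N0 eta0 eta1 a b (h/R) + Pc / R^2 \<ge> 2 * sqrt (k * Pc * G)"
      by linarith
    hence L: "A / (pi * Eb) * (k * R^2 * Gam fc c N0 eta0 eta1 a b (h/R) + Pc / R^2)
        \<ge> A / (pi * Eb) * (2 * sqrt (k * Pc * G))"
      using C by (intro mult_left_mono) auto
    have E2: "2 * A / (pi * Eb) * sqrt (k * Pc * G) = A / (pi * Eb) * (2 * sqrt (k * Pc * G))"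
      by simp
    show ?thesis unfolding eq E2 by (rule L)
  qed
  define Ro where "Ro = Ropt fc c N0 eta0 eta1 a b Pc lam S hn"
  have part2: "Phi fc c N0 eta0 eta1 a b A Eb Pc lam S Ro (Ro * hn) = 2 * A / (pi * Eb) * sqrt (k * Pc * G)"
  proof (cases "G = 0")
    case True
    hence "Ro = 0" by (simp add: Ro_def Ropt_def G_def k_def)
    thus ?thesis using True by (simp add: Phi_def)
  next
    case False
    hence Gp: "G > 0" using G by simp
    have pq: "Pc / (k * G) > 0" using Gp k assms(7) by simp
    have RoE: "Ro = root 4 (Pc / (k * G))" by (simp add: Ro_def Ropt_def G_def k_def)
    have R4: "Ro ^ 4 = Pc / (k * G)" and Rp: "Ro > 0"
      unfolding RoE using pq by (simp_all add: real_root_pow_pos)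
    have R2: "Ro^2 = sqrt (Pc / (k * G))"
    proof -
      have e: "Ro^4 = (Ro^2)^2" by simp
      have "sqrt (Ro^4) = Ro^2" using real_sqrt_abs[of "Ro^2"] by (simp only: e) simp
      thus ?thesis using R4 by simp
    qed
    have hr: "Ro * hn / Ro = hn" using Rp by simp
    have eq: "Phi fc c N0 eta0 eta1 a b A Eb Pc lam S Ro (Ro * hn)
        = A / (pi * Eb) * (k * Ro^2 * G + Pc / Ro^2)"
      using Rp by (simp add: Phi_def Pt_scale k_def G_def hr field_simps power_def)
    define u where "u = sqrt (k * G)"
    define v where "v = sqrt Pc"
    have up: "u > 0" and vp: "v > 0" using k Gp assms(7) by (simp_all add: u_def v_def)
    have uu: "u * u = k * G" using k Gp by (simp add: u_def)
    have vv: "v * v = Pc" using assms(7) by (simp add: v_def)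
    have R2': "Ro^2 = v / u" unfolding R2 u_def v_def by (simp add: real_sqrt_divide)
    have q: "sqrt (k * Pc * G) = u * v" unfolding u_def v_def
      by (simp add: real_sqrt_mult[symmetric] mult_ac)
    have "k * Ro^2 * G = sqrt (k * Pc * G)"
    proof -
      have "k * Ro^2 * G = (u * u) * (v / u)" by (simp add: R2' uu mult_ac)
      also have "\<dots> = u * v" using up by (simp add: field_simps)
      finally show ?thesis using q by simp
    qed
    moreover have "Pc / Ro^2 = sqrt (k * Pc * G)"
    proof -
      have "Pc / Ro^2 = (v * v) / (v / u)" unfolding R2' vv ..
      also have "\<dots> = u * v" using up vp by (simp add: field_simps)
      finally show ?thesis using q by simp
    qed
    ultimately show ?thesis using eq by simp
  qed
  show ?thesis using part1 part2 unfolding G_def k_def Ro_def by (auto simp: mult.assoc)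
qed

theorem theorem1:
  fixes fc c N0 eta0 eta1 a b A Eb Pc lam S hn :: real
    and \<kappa> :: nat and Ab lamb :: "nat \<Rightarrow> real"
  assumes "fc > 0" "c > 0" "N0 > 0" "eta0 > 0" "eta1 > 0" "a > 0" "b > 0"
    and "A > 0" "Eb > 0" "Pc > 0" "lam > 0" "S > 0"
    and "hn \<ge> 0"
    and hmin: "\<forall>x\<ge>0. Gam fc c N0 eta0 eta1 a b hn \<le> Gam fc c N0 eta0 eta1 a b x"
    and "\<forall>\<beta>\<in>{1..\<kappa>}. Ab \<beta> > 0 \<and> lamb \<beta> > 0"
  shows "(\<forall>R h. R > 0 \<longrightarrow> h \<ge> 0 \<longrightarrow>
            Phi fc c N0 eta0 eta1 a b A Eb Pc lam S R h
              \<ge> 2 * A / (pi * Eb) * sqrt (lam * (2 powr S - 1) * Pc * Gam fc c N0 eta0 eta1 a b hn))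
       \<and> Phi fc c N0 eta0 eta1 a b A Eb Pc lam S
            (Ropt fc c N0 eta0 eta1 a b Pc lam S hn)
            (Ropt fc c N0 eta0 eta1 a b Pc lam S hn * hn)
          = 2 * A / (pi * Eb) * sqrt (lam * (2 powr S - 1) * Pc * Gam fc c N0 eta0 eta1 a b hn)
       \<and> (\<forall>R h :: nat \<Rightarrow> real. (\<forall>\<beta>\<in>{1..\<kappa>}. R \<beta> > 0 \<and> h \<beta> \<ge> 0) \<longrightarrow>
            (\<Sum>\<beta>=1..\<kappa>. Phi fc c N0 eta0 eta1 a b (Ab \<beta>) Eb Pc (lamb \<beta>) S
                 (Ropt fc c N0 eta0 eta1 a b Pc (lamb \<beta>) S hn)
                 (Ropt fc c N0 eta0 eta1 a b Pc (lamb \<beta>) S hn * hn))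
            \<le> (\<Sum>\<beta>=1..\<kappa>. Phi fc c N0 eta0 eta1 a b (Ab \<beta>) Eb Pc (lamb \<beta>) S (R \<beta>) (h \<beta>)))"
proof -
  have sub: "\<forall>R h :: nat \<Rightarrow> real. (\<forall>\<beta>\<in>{1..\<kappa>}. R \<beta> > 0 \<and> h \<beta> \<ge> 0) \<longrightarrow>
            (\<Sum>\<beta>=1..\<kappa>. Phi fc c N0 eta0 eta1 a b (Ab \<beta>) Eb Pc (lamb \<beta>) S
                 (Ropt fc c N0 eta0 eta1 a b Pc (lamb \<beta>) S hn)
                 (Ropt fc c N0 eta0 eta1 a b Pc (lamb \<beta>) S hn * hn))
            \<le> (\<Sum>\<beta>=1..\<kappa>. Phi fc c N0 eta0 eta1 a b (Ab \<beta>) Eb Pc (lamb \<beta>) S (R \<beta>) (h \<beta>))"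
  proof (intro allI impI sum_mono)
    fix R h :: "nat \<Rightarrow> real" and \<beta> assume H: "\<forall>\<beta>\<in>{1..\<kappa>}. R \<beta> > 0 \<and> h \<beta> \<ge> 0" and b: "\<beta> \<in> {1..\<kappa>}"
    have "Ab \<beta> > 0" "lamb \<beta> > 0" using assms(15) b by auto
    from main1[OF assms(3-6) this(1) assms(9,10) this(2) assms(12) hmin]
    show "Phi fc c N0 eta0 eta1 a b (Ab \<beta>) Eb Pc (lamb \<beta>) S
                 (Ropt fc c N0 eta0 eta1 a b Pc (lamb \<beta>) S hn)
                 (Ropt fc c N0 eta0 eta1 a b Pc (lamb \<beta>) S hn * hn)
          \<le> Phi fc c N0 eta0 eta1 a b (Ab \<beta>) Eb Pc (lamb \<beta>) S (R \<beta>) (h \<beta>)"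
      using H b by auto
  qed
  show ?thesis using main1[OF assms(3-6) assms(8-12) hmin] sub by blast
qed

end
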